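(* Let $G$ be a group, $S \subset G$ a finite set of semigroup generators of $G$, $\Sigma$ a finite alphabet, $L \subseteq \Sigma^*$ a language and $\psi : L \to G$ a bijection. Suppose that for every $s \in S$ there is a function $f_s : \Sigma^* \to \Sigma^*$ with $\psi(f_s(w)) = \psi(w)s$ for all $w \in L$, such that $f_s$ is computed by a one-tape Turing machine in time $o(n \log n)$, in the following sense: there is a one-tape Turing machine $\mathrm{TM}_s$ and a function $T_s(n)$ with $T_s(n)/(n\log n) \to 0$ such that on every input $x \in \Sigma^*$ of length $n$ (tape initially $\boxplus x \boxdot^\infty$, head on $\boxplus$), $\mathrm{TM}_s$ halts within $T_s(n)$ steps with tape content $\boxplus y \boxdot^\infty$, where $y$ is empty or does not end in $\boxdot$, and $f_s(x)$ is the string obtained from $y$ by deleting all symbols not in $\Sigma$. Then the normal form $\psi$ is quasigeodesic: there exists a constant $C > 0$ such that for every $g \in G$, $|w| \leqslant C(d_S(g) + 1)$, where $w \in L$ is the unique string with $\psi(w) = g$.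
   Context: A one-tape Turing machine has one semi-infinite tape whose leftmost cell contains the unmodifiable symbol $\boxplus$ (occurring only there); $\boxdot$ denotes the blank symbol; the tape alphabet contains $\Sigma \cup \{\boxplus, \boxdot\}$. For $g \in G$, $d_S(g)$ denotes the length of a shortest word $g_1 \dots g_n$ with $g_i \in S$ such that $g = g_1 \cdots g_n$ in $G$. $|w|$ denotes the length of the string $w$. *)

theory Defs
  imports Complex_Main "HOL-Algebra.Group"
begin

text \<open>Tape symbols: input letters from the finite alphabet 'a (Sigma), the left-end
  marker (boxplus), the blank (boxdot), and finitely many auxiliary symbols (coded by nat).\<close>

datatype 'a tsym = Sym 'a | LeftEnd | Blank | Aux nat

text \<open>Moves: -1 = left, 0 = stay, 1 = right.  States are coded by naturals.\<close>

record 'a tm =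
  tm_states :: "nat set"
  tm_aux    :: "nat set"
  tm_start  :: nat
  tm_final  :: "nat set"
  tm_delta  :: "nat \<Rightarrow> 'a tsym \<Rightarrow> nat \<times> 'a tsym \<times> int"

definition tm_alphabet :: "'a tm \<Rightarrow> 'a tsym set" where
  "tm_alphabet M = range Sym \<union> {LeftEnd, Blank} \<union> Aux ` tm_aux M"

definition wf_tm :: "'a tm \<Rightarrow> bool" where
  "wf_tm M \<longleftrightarrow> finite (tm_states M) \<and> finite (tm_aux M) \<and>
     tm_start M \<in> tm_states M \<and> tm_final M \<subseteq> tm_states M \<and>
     (\<forall>q \<in> tm_states M - tm_final M. \<forall>a \<in> tm_alphabet M.
        (case tm_delta M q a of (q', b, d) \<Rightarrow>
           q' \<in> tm_states M \<and> b \<in> tm_alphabet M \<and> d \<in> {-1, 0, 1} \<and>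
           (a = LeftEnd \<longrightarrow> b = LeftEnd \<and> d \<noteq> -1) \<and>
           (a \<noteq> LeftEnd \<longrightarrow> b \<noteq> LeftEnd)))"

type_synonym 'a config = "nat \<times> (nat \<Rightarrow> 'a tsym) \<times> nat"
  \<comment> \<open>(state, tape contents, head position); cell 0 holds the left-end marker\<close>

definition tm_step :: "'a tm \<Rightarrow> 'a config \<Rightarrow> 'a config" where
  "tm_step M c = (case c of (q, tp, p) \<Rightarrow>
     if q \<in> tm_final M then c
     else (case tm_delta M q (tp p) of (q', b, d) \<Rightarrow>
       (q', tp(p := b), nat (int p + d))))"

definition tape_of :: "'a tsym list \<Rightarrow> nat \<Rightarrow> 'a tsym" where
  "tape_of y = (\<lambda>i. if i = 0 then LeftEnd else if i \<le> length y then y ! (i - 1) else Blank)"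

definition init_config :: "'a tm \<Rightarrow> 'a list \<Rightarrow> 'a config" where
  "init_config M x = (tm_start M, tape_of (map Sym x), 0)"

definition sigma_part :: "'a tsym list \<Rightarrow> 'a list" where
  "sigma_part y = concat (map (\<lambda>s. case s of Sym a \<Rightarrow> [a] | _ \<Rightarrow> []) y)"

definition tm_computes_within :: "'a tm \<Rightarrow> real \<Rightarrow> 'a list \<Rightarrow> 'a list \<Rightarrow> bool" where
  "tm_computes_within M T x z \<longleftrightarrow>
     (\<exists>t::nat. real t \<le> T \<and>
        (case (tm_step M ^^ t) (init_config M x) of (q, tp, p) \<Rightarrow>
          q \<in> tm_final M \<and>
          (\<exists>y. (y = [] \<or> last y \<noteq> Blank) \<and> tp = tape_of y \<and> z = sigma_part y)))"

definition tm_computes_in_time :: "'a tm \<Rightarrow> (nat \<Rightarrow> real) \<Rightarrow> ('a list \<Rightarrow> 'a list) \<Rightarrow> bool" where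
  "tm_computes_in_time M T f \<longleftrightarrow>
     wf_tm M \<and> (\<forall>x. tm_computes_within M (T (length x)) x (f x))"

definition word_prod :: "('g, 'b) monoid_scheme \<Rightarrow> 'g list \<Rightarrow> 'g" where
  "word_prod G ws = foldr (\<lambda>a b. a \<otimes>\<^bsub>G\<^esub> b) ws \<one>\<^bsub>G\<^esub>"

definition semigroup_generates :: "('g, 'b) monoid_scheme \<Rightarrow> 'g set \<Rightarrow> bool" where
  "semigroup_generates G S \<longleftrightarrow> S \<subseteq> carrier G \<and>
     carrier G = {word_prod G ws | ws. ws \<noteq> [] \<and> set ws \<subseteq> S}"

definition word_length :: "('g, 'b) monoid_scheme \<Rightarrow> 'g set \<Rightarrow> 'g \<Rightarrow> nat" where
  "word_length G S g = (LEAST n. \<exists>ws. set ws \<subseteq> S \<and> length ws = n \<and> word_prod G ws = g)"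

end

theory Submission
  imports Defs
begin


definition run :: "'a tm \<Rightarrow> 'a list \<Rightarrow> nat \<Rightarrow> 'a config" where
  "run M x t = (tm_step M ^^ t) (init_config M x)"
definition stt :: "'a tm \<Rightarrow> 'a list \<Rightarrow> nat \<Rightarrow> nat" where
  "stt M x t = fst (run M x t)"
definition tpe :: "'a tm \<Rightarrow> 'a list \<Rightarrow> nat \<Rightarrow> nat \<Rightarrow> 'a tsym" where
  "tpe M x t = fst (snd (run M x t))"
definition hps :: "'a tm \<Rightarrow> 'a list \<Rightarrow> nat \<Rightarrow> nat" where
  "hps M x t = snd (snd (run M x t))"

lemma run_eq: "run M x t = (stt M x t, tpe M x t, hps M x t)"
  by (simp add: stt_def tpe_def hps_def)

lemma run_Suc: "run M x (Suc t) = tm_step M (run M x t)"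
  by (simp add: run_def)

lemma run_0: "run M x 0 = (tm_start M, tape_of (map Sym x), 0)"
  by (simp add: run_def init_config_def)

lemma final_stays:
  assumes "stt M x t \<in> tm_final M"
  shows "run M x (t + k) = run M x t"
proof (induction k)
  case 0 then show ?case by simp
next
  case (Suc k)
  have "run M x (t + Suc k) = tm_step M (run M x (t + k))" by (simp add: run_Suc)
  also have "\<dots> = tm_step M (run M x t)" using Suc by simp
  also have "\<dots> = run M x t" using assms by (simp add: run_eq tm_step_def)
  finally show ?case .
qed

lemma final_stays':
  assumes "stt M x t \<in> tm_final M" "t \<le> u"
  shows "run M x u = run M x t"
  using final_stays[OF assms(1), of "u - t"] assms(2) by simp

definition inv_at :: "'a tm \<Rightarrow> 'a list \<Rightarrow> nat \<Rightarrow> bool" where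
  "inv_at M x t \<longleftrightarrow> stt M x t \<in> tm_states M \<and> (\<forall>k. tpe M x t k \<in> tm_alphabet M)"

lemma inv_all:
  assumes wf: "wf_tm M"
  shows "inv_at M x t"
proof (induction t)
  case 0
  have "tape_of (map Sym x) k \<in> tm_alphabet M" for k
    by (auto simp: tape_of_def tm_alphabet_def)
  then show ?case using wf by (simp add: inv_at_def stt_def tpe_def run_0 wf_tm_def)
next
  case (Suc t)
  show ?case
  proof (cases "stt M x t \<in> tm_final M")
    case True
    then show ?thesis using Suc final_stays[OF True, of 1] by (simp add: inv_at_def stt_def tpe_def)
  next
    case False
    obtain q' b d where dl: "tm_delta M (stt M x t) (tpe M x t (hps M x t)) = (q', b, d)"
      by (metis prod_cases3)
    have r: "run M x (Suc t) = (q', (tpe M x t)(hps M x t := b), nat (int (hps M x t) + d))"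
      using False dl by (simp add: run_Suc run_eq[of M x t] tm_step_def)
    have "q' \<in> tm_states M \<and> b \<in> tm_alphabet M"
      using wf Suc False dl unfolding wf_tm_def inv_at_def
      by (metis (no_types, lifting) DiffI case_prod_conv)
    then show ?thesis using Suc r by (simp add: inv_at_def stt_def tpe_def)
  qed
qed

lemma step_nonfinal:
  assumes wf: "wf_tm M" and nf: "stt M x t \<notin> tm_final M"
  obtains q' b d where "tm_delta M (stt M x t) (tpe M x t (hps M x t)) = (q', b, d)"
    "d \<in> {-1, 0, 1}"
    "run M x (Suc t) = (q', (tpe M x t)(hps M x t := b), nat (int (hps M x t) + d))"
proof -
  obtain q' b d where dl: "tm_delta M (stt M x t) (tpe M x t (hps M x t)) = (q', b, d)"
    by (metis prod_cases3)
  have r: "run M x (Suc t) = (q', (tpe M x t)(hps M x t := b), nat (int (hps M x t) + d))"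
    using nf dl by (simp add: run_Suc run_eq[of M x t] tm_step_def)
  have "d \<in> {-1, 0, 1}"
    using wf inv_all[OF wf, of x t] nf dl unfolding wf_tm_def inv_at_def
    by (metis (no_types, lifting) DiffI case_prod_conv)
  then show ?thesis using that dl r by blast
qed

lemma pos_step:
  assumes wf: "wf_tm M"
  shows "hps M x (Suc t) \<le> Suc (hps M x t) \<and> hps M x t \<le> Suc (hps M x (Suc t))"
proof (cases "stt M x t \<in> tm_final M")
  case True
  then show ?thesis using final_stays[OF True, of 1] by (simp add: hps_def)
next
  case False
  then obtain q' b d where "d \<in> {-1, 0, 1}"
    "run M x (Suc t) = (q', (tpe M x t)(hps M x t := b), nat (int (hps M x t) + d))"
    by (rule step_nonfinal[OF wf])
  then show ?thesis by (auto simp: hps_def)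
qed

lemma tape_step:
  assumes wf: "wf_tm M" and "k \<noteq> hps M x t"
  shows "tpe M x (Suc t) k = tpe M x t k"
proof (cases "stt M x t \<in> tm_final M")
  case True
  then show ?thesis using final_stays[OF True, of 1] by (simp add: tpe_def)
next
  case False
  then obtain q' b d where
    "run M x (Suc t) = (q', (tpe M x t)(hps M x t := b), nat (int (hps M x t) + d))"
    by (rule step_nonfinal[OF wf])
  then show ?thesis using assms by (simp add: tpe_def)
qed

lemma tape_unchanged:
  assumes wf: "wf_tm M" and "\<forall>u\<in>{t1..<t2}. hps M x u \<noteq> k" and "t1 \<le> t2"
  shows "tpe M x t2 k = tpe M x t1 k"
  using assms(3,2)
proof (induction t2 rule: dec_induct)
  case base then show ?case by simp
next
  case (step n)
  have "hps M x n \<noteq> k" using step.prems step.hyps by auto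
  moreover have "tpe M x n k = tpe M x t1 k" using step by auto
  ultimately show ?case using tape_step[OF wf, of k x n] by auto
qed

lemma pos_le_time:
  assumes wf: "wf_tm M"
  shows "hps M x t \<le> t"
proof (induction t)
  case 0 then show ?case by (simp add: hps_def run_0)
next
  case (Suc t) then show ?case using pos_step[OF wf, of x t] by simp
qed



definition CS :: "'a tm \<Rightarrow> 'a list \<Rightarrow> nat \<Rightarrow> nat set" where
  "CS M x b = {u. (hps M x u = b \<and> hps M x (Suc u) = Suc b) \<or> (hps M x u = Suc b \<and> hps M x (Suc u) = b)}"

definition cnt :: "'a tm \<Rightarrow> 'a list \<Rightarrow> nat \<Rightarrow> nat \<Rightarrow> nat" where
  "cnt M x b t = card {u \<in> CS M x b. u < t}"

definition cseq :: "'a tm \<Rightarrow> 'a list \<Rightarrow> nat \<Rightarrow> nat list" where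
  "cseq M x b = map (\<lambda>m. stt M x (Suc (THE u. u \<in> CS M x b \<and> cnt M x b u = m))) [0..<card (CS M x b)]"

lemma cnt_0[simp]: "cnt M x b 0 = 0"
  by (simp add: cnt_def)

lemma cnt_Suc: "cnt M x b (Suc t) = cnt M x b t + (if t \<in> CS M x b then 1 else 0)"
proof -
  have e: "{u \<in> CS M x b. u < Suc t} = {u \<in> CS M x b. u < t} \<union> (if t \<in> CS M x b then {t} else {})"
    by (auto simp: less_Suc_eq)
  have f: "finite {u \<in> CS M x b. u < t}" by simp
  show ?thesis unfolding cnt_def e using f by auto
qed

lemma cnt_mono: "t1 \<le> t2 \<Longrightarrow> cnt M x b t1 \<le> cnt M x b t2"
  unfolding cnt_def by (rule card_mono) auto

lemma parity:
  assumes wf: "wf_tm M"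
  shows "hps M x t \<le> b \<longleftrightarrow> even (cnt M x b t)"
proof (induction t)
  case 0 then show ?case by (simp add: hps_def run_0)
next
  case (Suc t)
  have ps: "hps M x (Suc t) \<le> Suc (hps M x t) \<and> hps M x t \<le> Suc (hps M x (Suc t))"
    by (rule pos_step[OF wf])
  show ?case
  proof (cases "t \<in> CS M x b")
    case True
    then show ?thesis using Suc by (auto simp: cnt_Suc CS_def)
  next
    case False
    then have "hps M x t \<le> b \<longleftrightarrow> hps M x (Suc t) \<le> b"
      using ps unfolding CS_def by auto
    then show ?thesis using Suc False by (simp add: cnt_Suc)
  qed
qed

lemma CS_halt:
  assumes "stt M x t0 \<in> tm_final M"
  shows "CS M x b \<subseteq> {..<t0}"
proof
  fix u assume u: "u \<in> CS M x b"
  show "u \<in> {..<t0}"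
  proof (rule ccontr)
    assume "u \<notin> {..<t0}"
    then have "t0 \<le> u" by simp
    then have "run M x u = run M x t0" "run M x (Suc u) = run M x t0"
      using final_stays'[OF assms, of u] final_stays'[OF assms, of "Suc u"] by linarith+
    then have "hps M x u = hps M x (Suc u)" by (simp add: hps_def)
    then show False using u by (auto simp: CS_def)
  qed
qed

lemma cnt_le_card:
  assumes "finite (CS M x b)"
  shows "cnt M x b t \<le> card (CS M x b)"
  unfolding cnt_def using assms by (intro card_mono) auto

lemma cnt_strict:
  assumes "finite (CS M x b)" "u \<in> CS M x b" "u < v"
  shows "cnt M x b u < cnt M x b v"
proof -
  have "cnt M x b (Suc u) = Suc (cnt M x b u)" using assms(2) by (simp add: cnt_Suc)
  moreover have "cnt M x b (Suc u) \<le> cnt M x b v" using assms(3) by (intro cnt_mono) simp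
  ultimately show ?thesis by simp
qed

lemma cnt_CS_bij:
  assumes fin: "finite (CS M x b)"
  shows "cnt M x b ` CS M x b = {..<card (CS M x b)}" and "inj_on (cnt M x b) (CS M x b)"
proof -
  show inj: "inj_on (cnt M x b) (CS M x b)"
  proof (rule inj_onI)
    fix u v assume "u \<in> CS M x b" "v \<in> CS M x b" "cnt M x b u = cnt M x b v"
    then show "u = v" using cnt_strict[OF fin] by (metis less_irrefl nat_neq_iff)
  qed
  have sub: "cnt M x b ` CS M x b \<subseteq> {..<card (CS M x b)}"
  proof
    fix m assume "m \<in> cnt M x b ` CS M x b"
    then obtain u where u: "u \<in> CS M x b" "m = cnt M x b u" by auto
    have "{w \<in> CS M x b. w < u} \<subset> CS M x b" using u by auto
    then have "card {w \<in> CS M x b. w < u} < card (CS M x b)" using fin by (simp add: psubset_card_mono)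
    then show "m \<in> {..<card (CS M x b)}" using u by (simp add: cnt_def)
  qed
  have "card (cnt M x b ` CS M x b) = card {..<card (CS M x b)}"
    using card_image[OF inj] by simp
  then show "cnt M x b ` CS M x b = {..<card (CS M x b)}"
    using sub by (intro card_subset_eq) auto
qed

lemma crossing_the:
  assumes fin: "finite (CS M x b)" and m: "m < card (CS M x b)"
  shows "(THE u. u \<in> CS M x b \<and> cnt M x b u = m) \<in> CS M x b \<and>
         cnt M x b (THE u. u \<in> CS M x b \<and> cnt M x b u = m) = m"
proof -
  obtain u where u: "u \<in> CS M x b" "cnt M x b u = m"
    using cnt_CS_bij(1)[OF fin] m by (metis imageE lessThan_iff)
  have "\<exists>!u. u \<in> CS M x b \<and> cnt M x b u = m"
    using u cnt_CS_bij(2)[OF fin] by (metis inj_on_eq_iff)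
  then show ?thesis by (rule theI')
qed

lemma cseq_nth:
  assumes fin: "finite (CS M x b)" and m: "m < card (CS M x b)"
  shows "\<exists>u. u \<in> CS M x b \<and> cnt M x b u = m \<and> cseq M x b ! m = stt M x (Suc u)"
  using crossing_the[OF assms] m by (auto simp: cseq_def)

lemma length_cseq[simp]: "length (cseq M x b) = card (CS M x b)"
  by (simp add: cseq_def)

lemma cnt_const_between:
  assumes "cnt M x b t1 = m" "cnt M x b t2 = m" "t1 \<le> u" "u \<le> t2"
  shows "cnt M x b u = m"
  using cnt_mono[OF assms(3), of M x b] cnt_mono[OF assms(4), of M x b] assms by simp



definition mrg :: "nat \<Rightarrow> nat \<Rightarrow> (nat \<Rightarrow> 'a tsym) \<Rightarrow> (nat \<Rightarrow> 'a tsym) \<Rightarrow> nat \<Rightarrow> 'a tsym" where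
  "mrg i D tL tR k = (if k \<le> i then tL k else tR (k + D))"

lemma seg_right:
  assumes wf: "wf_tm M"
    and "\<forall>u\<in>{t..<t+d}. i + D < hps M x u"
    and "run M y s = (stt M x t, mrg i D tL (tpe M x t), hps M x t - D)"
  shows "run M y (s+d) = (stt M x (t+d), mrg i D tL (tpe M x (t+d)), hps M x (t+d) - D)"
  using assms(2)
proof (induction d)
  case 0 then show ?case using assms(3) by simp
next
  case (Suc d)
  define u where "u = t + d"
  have IH: "run M y (s+d) = (stt M x u, mrg i D tL (tpe M x u), hps M x u - D)"
    using Suc by (simp add: u_def)
  have pu: "i + D < hps M x u" using Suc.prems by (simp add: u_def)
  have rd: "run M y (s + Suc d) = tm_step M (run M y (s+d))" by (simp add: run_Suc)
  show ?case
  proof (cases "stt M x u \<in> tm_final M")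
    case True
    have "run M x (Suc u) = run M x u" using final_stays[OF True, of 1] by simp
    then show ?thesis using rd IH True
      by (simp add: tm_step_def u_def[symmetric] stt_def tpe_def hps_def)
  next
    case False
    obtain q' b dd where dl: "tm_delta M (stt M x u) (tpe M x u (hps M x u)) = (q', b, dd)"
      "dd \<in> {-1, 0, 1}"
      "run M x (Suc u) = (q', (tpe M x u)(hps M x u := b), nat (int (hps M x u) + dd))"
      by (rule step_nonfinal[OF wf False])
    have nl: "\<not> hps M x u - D \<le> i" "hps M x u - D + D = hps M x u" using pu by linarith+
    have rd2: "mrg i D tL (tpe M x u) (hps M x u - D) = tpe M x u (hps M x u)"
      using nl by (simp add: mrg_def)
    have t1: "mrg i D tL ((tpe M x u)(hps M x u := b)) = (mrg i D tL (tpe M x u))(hps M x u - D := b)"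
      using pu by (auto simp: mrg_def fun_eq_iff)
    have t2: "nat (int (hps M x u - D) + dd) = nat (int (hps M x u) + dd) - D"
      using pu dl(2) by auto
    have R: "run M y (s + Suc d) = (q', (mrg i D tL (tpe M x u))(hps M x u - D := b), nat (int (hps M x u - D) + dd))"
      using rd IH False dl(1) rd2 by (simp add: tm_step_def)
    have E: "stt M x (Suc u) = q'" "tpe M x (Suc u) = (tpe M x u)(hps M x u := b)"
      "hps M x (Suc u) = nat (int (hps M x u) + dd)"
      using dl(3) by (simp_all add: stt_def tpe_def hps_def)
    have tu: "t + Suc d = Suc u" by (simp add: u_def)
    show ?thesis unfolding tu E t1 t2[symmetric] using R .
  qed
qed

lemma seg_left:
  assumes wf: "wf_tm M"
    and "\<forall>u\<in>{t..<t+d}. hps M x u \<le> i"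
    and "run M y s = (stt M x t, mrg i D (tpe M x t) tR, hps M x t)"
  shows "run M y (s+d) = (stt M x (t+d), mrg i D (tpe M x (t+d)) tR, hps M x (t+d))"
  using assms(2)
proof (induction d)
  case 0 then show ?case using assms(3) by simp
next
  case (Suc d)
  define u where "u = t + d"
  have IH: "run M y (s+d) = (stt M x u, mrg i D (tpe M x u) tR, hps M x u)"
    using Suc by (simp add: u_def)
  have pu: "hps M x u \<le> i" using Suc.prems by (simp add: u_def)
  have rd: "run M y (s + Suc d) = tm_step M (run M y (s+d))" by (simp add: run_Suc)
  show ?case
  proof (cases "stt M x u \<in> tm_final M")
    case True
    have "run M x (Suc u) = run M x u" using final_stays[OF True, of 1] by simp
    then show ?thesis using rd IH True
      by (simp add: tm_step_def u_def[symmetric] stt_def tpe_def hps_def)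
  next
    case False
    obtain q' b dd where dl: "tm_delta M (stt M x u) (tpe M x u (hps M x u)) = (q', b, dd)"
      "dd \<in> {-1, 0, 1}"
      "run M x (Suc u) = (q', (tpe M x u)(hps M x u := b), nat (int (hps M x u) + dd))"
      by (rule step_nonfinal[OF wf False])
    have rd2: "mrg i D (tpe M x u) tR (hps M x u) = tpe M x u (hps M x u)"
      using pu by (simp add: mrg_def)
    have t1: "mrg i D ((tpe M x u)(hps M x u := b)) tR = (mrg i D (tpe M x u) tR)(hps M x u := b)"
      using pu by (auto simp: mrg_def fun_eq_iff)
    have R: "run M y (s + Suc d) = (q', (mrg i D (tpe M x u) tR)(hps M x u := b), nat (int (hps M x u) + dd))"
      using rd IH False dl(1) rd2 by (simp add: tm_step_def)
    have E: "stt M x (Suc u) = q'" "tpe M x (Suc u) = (tpe M x u)(hps M x u := b)"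
      "hps M x (Suc u) = nat (int (hps M x u) + dd)"
      using dl(3) by (simp_all add: stt_def tpe_def hps_def)
    have tu: "t + Suc d = Suc u" by (simp add: u_def)
    show ?thesis unfolding tu E t1 using R .
  qed
qed



lemma init_cut:
  assumes ij: "i < j" "j \<le> length x"
  shows "tape_of (map Sym (take i x @ drop j x)) = mrg i (j - i) (tape_of (map Sym x)) (tape_of (map Sym x))"
proof
  fix k
  show "tape_of (map Sym (take i x @ drop j x)) k = mrg i (j - i) (tape_of (map Sym x)) (tape_of (map Sym x)) k"
  proof (cases "k \<le> i")
    case True
    then show ?thesis using ij by (auto simp: tape_of_def mrg_def nth_append)
  next
    case False
    then show ?thesis using ij by (auto simp: tape_of_def mrg_def nth_append ac_simps)
  qed
qed

lemma cross_even:
  assumes wf: "wf_tm M" and "u \<in> CS M x b" "even (cnt M x b u)"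
  shows "hps M x u = b \<and> hps M x (Suc u) = Suc b"
  using assms parity[OF wf, of x u b] by (auto simp: CS_def)

lemma cross_odd:
  assumes wf: "wf_tm M" and "u \<in> CS M x b" "odd (cnt M x b u)"
  shows "hps M x u = Suc b \<and> hps M x (Suc u) = b"
  using assms parity[OF wf, of x u b] by (auto simp: CS_def)

lemma cnt_last:
  assumes "finite (CS M x b)" "u \<in> CS M x b" "cnt M x b v = cnt M x b u"
  shows "v \<le> u"
  using cnt_strict[OF assms(1,2), of v] assms(3) by (metis less_irrefl not_le)

lemma cnt_after:
  assumes "u \<in> CS M x b" "cnt M x b v = Suc (cnt M x b u)"
  shows "Suc u \<le> v"
proof (rule ccontr)
  assume "\<not> Suc u \<le> v"
  then have "v \<le> u" by simp
  then have "cnt M x b v \<le> cnt M x b u" by (rule cnt_mono)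
  then show False using assms(2) by simp
qed

lemma cut:
  assumes wf: "wf_tm M" and halt: "stt M x t0 \<in> tm_final M"
    and ij: "i < j" "j \<le> length x" and eq: "cseq M x i = cseq M x j"
    and far: "length x + R \<le> hps M x tX" and R: "1 \<le> R"
  shows "\<exists>s. length (take i x @ drop j x) + R \<le> hps M (take i x @ drop j x) s"
proof -
  define y where "y = take i x @ drop j x"
  define D where "D = j - i"
  have jD: "j = i + D" using ij by (simp add: D_def)
  have ly: "length y = length x - D" using ij by (simp add: y_def D_def)
  have fi: "finite (CS M x i)" and fj: "finite (CS M x j)"
    using finite_subset[OF CS_halt[OF halt]] by auto
  define N where "N = card (CS M x i)"
  have Nj: "card (CS M x j) = N" using eq unfolding N_def by (metis length_cseq)
  have init: "run M y 0 = (stt M x 0, mrg i D (tpe M x 0) (tpe M x 0), hps M x 0)"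
    using init_cut[OF ij] by (simp add: run_0 y_def D_def stt_def tpe_def hps_def)
  have claim: "m \<le> N \<longrightarrow> (\<exists>s tL tR. cnt M x i tL = m \<and> cnt M x j tR = m \<and>
      (\<forall>u. cnt M x i u = m \<longrightarrow> tL \<le> u) \<and> (\<forall>u. cnt M x j u = m \<longrightarrow> tR \<le> u) \<and>
      (if even m then run M y s = (stt M x tL, mrg i D (tpe M x tL) (tpe M x tR), hps M x tL)
       else run M y s = (stt M x tR, mrg i D (tpe M x tL) (tpe M x tR), hps M x tR - D)))" for m
  proof (induction m)
    case 0
    show ?case
      by (rule impI, rule exI[of _ 0], rule exI[of _ 0], rule exI[of _ 0]) (simp add: init)
  next
    case (Suc m)
    show ?case
    proof
      assume mN: "Suc m \<le> N"
      then obtain s tL tR where H: "cnt M x i tL = m" "cnt M x j tR = m"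
        "\<forall>u. cnt M x i u = m \<longrightarrow> tL \<le> u" "\<forall>u. cnt M x j u = m \<longrightarrow> tR \<le> u"
        "if even m then run M y s = (stt M x tL, mrg i D (tpe M x tL) (tpe M x tR), hps M x tL)
         else run M y s = (stt M x tR, mrg i D (tpe M x tL) (tpe M x tR), hps M x tR - D)"
        using Suc.IH by auto
      obtain ui where ui: "ui \<in> CS M x i" "cnt M x i ui = m" "cseq M x i ! m = stt M x (Suc ui)"
        using cseq_nth[OF fi, of m] mN by (auto simp: N_def)
      obtain uj where uj: "uj \<in> CS M x j" "cnt M x j uj = m" "cseq M x j ! m = stt M x (Suc uj)"
        using cseq_nth[OF fj, of m] mN Nj by auto
      have st: "stt M x (Suc ui) = stt M x (Suc uj)" using ui(3) uj(3) eq by simp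
      have tLui: "tL \<le> ui" using H(3) ui(2) by simp
      have tRuj: "tR \<le> uj" using H(4) uj(2) by simp
      have ci: "cnt M x i (Suc ui) = Suc m" using ui by (simp add: cnt_Suc)
      have cj: "cnt M x j (Suc uj) = Suc m" using uj by (simp add: cnt_Suc)
      have mi: "\<forall>u. cnt M x i u = Suc m \<longrightarrow> Suc ui \<le> u" using cnt_after[OF ui(1)] ui(2) by simp
      have mj: "\<forall>u. cnt M x j u = Suc m \<longrightarrow> Suc uj \<le> u" using cnt_after[OF uj(1)] uj(2) by simp
      have betw_i: "cnt M x i u = m" if "tL \<le> u" "u \<le> ui" for u
        using cnt_const_between[OF H(1) ui(2) that] .
      have betw_j: "cnt M x j u = m" if "tR \<le> u" "u \<le> uj" for u
        using cnt_const_between[OF H(2) uj(2) that] .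
      show "\<exists>s tL tR. cnt M x i tL = Suc m \<and> cnt M x j tR = Suc m \<and>
        (\<forall>u. cnt M x i u = Suc m \<longrightarrow> tL \<le> u) \<and> (\<forall>u. cnt M x j u = Suc m \<longrightarrow> tR \<le> u) \<and>
        (if even (Suc m) then run M y s = (stt M x tL, mrg i D (tpe M x tL) (tpe M x tR), hps M x tL)
         else run M y s = (stt M x tR, mrg i D (tpe M x tL) (tpe M x tR), hps M x tR - D))"
      proof (cases "even m")
        case True
        have Hs: "run M y s = (stt M x tL, mrg i D (tpe M x tL) (tpe M x tR), hps M x tL)"
          using H(5) True by simp
        have left: "\<forall>u\<in>{tL..<tL + (Suc ui - tL)}. hps M x u \<le> i"
        proof
          fix u assume u: "u \<in> {tL..<tL + (Suc ui - tL)}"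
          then have "cnt M x i u = m" using betw_i tLui by simp
          then show "hps M x u \<le> i" using parity[OF wf, of x u i] True by simp
        qed
        have r1: "run M y (s + (Suc ui - tL)) = (stt M x (Suc ui), mrg i D (tpe M x (Suc ui)) (tpe M x tR), hps M x (Suc ui))"
          using seg_left[OF wf left Hs] tLui by simp
        have pi: "hps M x (Suc ui) = Suc i" using cross_even[OF wf ui(1)] ui(2) True by simp
        have pj: "hps M x (Suc uj) = Suc j" using cross_even[OF wf uj(1)] uj(2) True by simp
        have tapeR: "tpe M x (Suc uj) k = tpe M x tR k" if "j < k" for k
        proof (rule tape_unchanged[OF wf])
          show "\<forall>u\<in>{tR..<Suc uj}. hps M x u \<noteq> k"
          proof
            fix u assume u: "u \<in> {tR..<Suc uj}"
            then have "cnt M x j u = m" using betw_j by simp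
            then show "hps M x u \<noteq> k" using parity[OF wf, of x u j] True that by auto
          qed
        qed (use tRuj in simp)
        have mg: "mrg i D (tpe M x (Suc ui)) (tpe M x tR) = mrg i D (tpe M x (Suc ui)) (tpe M x (Suc uj))"
          using tapeR jD by (auto simp: mrg_def fun_eq_iff)
        have "run M y (s + (Suc ui - tL)) = (stt M x (Suc uj), mrg i D (tpe M x (Suc ui)) (tpe M x (Suc uj)), hps M x (Suc uj) - D)"
          using r1 st mg pi pj jD by simp
        then show ?thesis using ci cj mi mj True
          by (intro exI[of _ "s + (Suc ui - tL)"] exI[of _ "Suc ui"] exI[of _ "Suc uj"]) simp
      next
        case False
        have Hs: "run M y s = (stt M x tR, mrg i D (tpe M x tL) (tpe M x tR), hps M x tR - D)"
          using H(5) False by simp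
        have right: "\<forall>u\<in>{tR..<tR + (Suc uj - tR)}. i + D < hps M x u"
        proof
          fix u assume u: "u \<in> {tR..<tR + (Suc uj - tR)}"
          then have "cnt M x j u = m" using betw_j tRuj by simp
          then show "i + D < hps M x u" using parity[OF wf, of x u j] False jD by simp
        qed
        have r1: "run M y (s + (Suc uj - tR)) = (stt M x (Suc uj), mrg i D (tpe M x tL) (tpe M x (Suc uj)), hps M x (Suc uj) - D)"
          using seg_right[OF wf right Hs] tRuj by simp
        have pi: "hps M x (Suc ui) = i" using cross_odd[OF wf ui(1)] ui(2) False by simp
        have pj: "hps M x (Suc uj) = j" using cross_odd[OF wf uj(1)] uj(2) False by simp
        have tapeL: "tpe M x (Suc ui) k = tpe M x tL k" if "k \<le> i" for k
        proof (rule tape_unchanged[OF wf])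
          show "\<forall>u\<in>{tL..<Suc ui}. hps M x u \<noteq> k"
          proof
            fix u assume u: "u \<in> {tL..<Suc ui}"
            then have "cnt M x i u = m" using betw_i by simp
            then show "hps M x u \<noteq> k" using parity[OF wf, of x u i] False that by auto
          qed
        qed (use tLui in simp)
        have mg: "mrg i D (tpe M x tL) (tpe M x (Suc uj)) = mrg i D (tpe M x (Suc ui)) (tpe M x (Suc uj))"
          using tapeL by (auto simp: mrg_def fun_eq_iff)
        have "run M y (s + (Suc uj - tR)) = (stt M x (Suc ui), mrg i D (tpe M x (Suc ui)) (tpe M x (Suc uj)), hps M x (Suc ui))"
          using r1 st mg pi pj jD by simp
        then show ?thesis using ci cj mi mj False
          by (intro exI[of _ "s + (Suc uj - tR)"] exI[of _ "Suc ui"] exI[of _ "Suc uj"]) simp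
      qed
    qed
  qed
  define m where "m = cnt M x j tX"
  have pX: "j < hps M x tX" using far R ij by simp
  have odd: "odd m" using parity[OF wf, of x tX j] pX by (simp add: m_def)
  have mN: "m \<le> N" using cnt_le_card[OF fj] Nj by (simp add: m_def)
  obtain s tL tR where H: "cnt M x j tR = m" "\<forall>u. cnt M x j u = m \<longrightarrow> tR \<le> u"
      "run M y s = (stt M x tR, mrg i D (tpe M x tL) (tpe M x tR), hps M x tR - D)"
    using claim[of m] mN odd by auto
  have tRX: "tR \<le> tX" using H(2) m_def by blast
  have cX: "cnt M x j tX = m" using m_def by simp
  have right: "\<forall>u\<in>{tR..<tR + (tX - tR)}. i + D < hps M x u"
  proof
    fix u assume u: "u \<in> {tR..<tR + (tX - tR)}"
    then have "tR \<le> u" "u \<le> tX" by auto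
    then have "cnt M x j u = m" by (rule cnt_const_between[OF H(1) cX])
    then have "\<not> hps M x u \<le> j" using parity[OF wf, of x u j] odd by simp
    then show "i + D < hps M x u" using jD by linarith
  qed
  have e1: "tR + (tX - tR) = tX" using tRX by simp
  have "run M y (s + (tX - tR)) = (stt M x (tR + (tX - tR)), mrg i D (tpe M x tL) (tpe M x (tR + (tX - tR))), hps M x (tR + (tX - tR)) - D)"
    by (rule seg_right[OF wf right H(3)])
  then have "run M y (s + (tX - tR)) = (stt M x tX, mrg i D (tpe M x tL) (tpe M x tX), hps M x tX - D)"
    unfolding e1 .
  then have "hps M y (s + (tX - tR)) = hps M x tX - D" unfolding hps_def by simp
  moreover have "length y + R \<le> hps M x tX - D" using ly far jD ij by linarith
  ultimately have "length y + R \<le> hps M y (s + (tX - tR))" by simp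
  then show ?thesis unfolding y_def by blast
qed



lemma geom_le: "(\<Sum>i\<le>k. (q::nat)^i) \<le> (q+1)^(Suc k)"
proof (induction k)
  case 0 then show ?case by simp
next
  case (Suc k)
  have "q^Suc k \<le> (q+1)^Suc k" by (rule power_mono) auto
  have a: "q^Suc k \<le> q * (q+1)^Suc k"
  proof -
    have "q^k \<le> (q+1)^k" by (rule power_mono) auto
    also have "\<dots> \<le> (q+1)^Suc k" by simp
    finally have "q * q^k \<le> q * (q+1)^Suc k" by (rule mult_left_mono) simp
    then show ?thesis by simp
  qed
  have "(\<Sum>i\<le>Suc k. q^i) = (\<Sum>i\<le>k. q^i) + q^Suc k" by simp
  also have "\<dots> \<le> (q+1)^Suc k + q * (q+1)^Suc k" using Suc a by linarith
  also have "\<dots> = (q+1)^Suc (Suc k)" by simp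
  finally show ?case .
qed

lemma count_short:
  assumes "finite Q"
  shows "card {xs. set xs \<subseteq> Q \<and> length xs < l} \<le> (card Q + 1)^l"
proof (cases l)
  case 0 then show ?thesis by simp
next
  case (Suc k)
  have "{xs. set xs \<subseteq> Q \<and> length xs < l} = {xs. set xs \<subseteq> Q \<and> length xs \<le> k}"
    using Suc by auto
  then show ?thesis using card_lists_length_le[OF assms, of k] geom_le[of "card Q" k] Suc by simp
qed

lemma sum_lengths_lower:
  assumes Q: "finite Q" and A: "finite A" and sub: "\<forall>xs\<in>A. set xs \<subseteq> Q"
  shows "real l * (real (card A) - real (card Q + 1) ^ l) \<le> real (\<Sum>xs\<in>A. length xs)"
proof -
  define Sm where "Sm = {xs \<in> A. length xs < l}"
  define Bg where "Bg = {xs \<in> A. \<not> length xs < l}"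
  have "Sm \<subseteq> {xs. set xs \<subseteq> Q \<and> length xs < l}" using sub by (auto simp: Sm_def)
  moreover have "finite {xs. set xs \<subseteq> Q \<and> length xs < l}"
    by (rule finite_subset[OF _ finite_lists_length_le[OF Q, of l]]) auto
  ultimately have "card Sm \<le> card {xs. set xs \<subseteq> Q \<and> length xs < l}" by (rule card_mono[rotated])
  then have cS: "card Sm \<le> (card Q + 1)^l" using count_short[OF Q, of l] by linarith
  have AU: "A = Sm \<union> Bg" "Sm \<inter> Bg = {}" by (auto simp: Sm_def Bg_def)
  have fS: "finite Sm" "finite Bg" using A by (auto simp: Sm_def Bg_def)
  have "card A = card Sm + card Bg" using fS AU card_Un_disjoint by metis
  then have e: "real (card A) = real (card Sm) + real (card Bg)" by simp
  have "real (card Sm) \<le> real ((card Q + 1)^l)" using cS by (simp only: of_nat_le_iff)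
  then have "real (card Sm) \<le> real (card Q + 1) ^ l" by simp
  then have cB: "real (card A) - real (card Q + 1) ^ l \<le> real (card Bg)" using e by linarith
  have "(\<Sum>xs\<in>Bg. l) \<le> (\<Sum>xs\<in>Bg. length xs)" by (rule sum_mono) (auto simp: Bg_def)
  also have "\<dots> \<le> (\<Sum>xs\<in>A. length xs)" using A by (intro sum_mono2) (auto simp: Bg_def)
  finally have "l * card Bg \<le> (\<Sum>xs\<in>A. length xs)" by (simp add: mult.commute)
  then have "real l * real (card Bg) \<le> real (\<Sum>xs\<in>A. length xs)" by (metis of_nat_le_iff of_nat_mult)
  moreover have "real l * (real (card A) - real (card Q + 1) ^ l) \<le> real l * real (card Bg)"
    using cB by (intro mult_left_mono) auto
  ultimately show ?thesis by linarith
qed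



lemma CS_disj:
  assumes "u \<in> CS M x b" "u \<in> CS M x b'"
  shows "b = b'"
  using assms by (auto simp: CS_def)

lemma time_bound:
  assumes halt: "stt M x t0 \<in> tm_final M"
  shows "(\<Sum>b\<le>n. length (cseq M x b)) \<le> t0"
proof -
  have fin: "\<forall>b\<in>{..n}. finite (CS M x b)"
    using finite_subset[OF CS_halt[OF halt]] by auto
  have dis: "\<forall>b\<in>{..n}. \<forall>b'\<in>{..n}. b \<noteq> b' \<longrightarrow> CS M x b \<inter> CS M x b' = {}"
    using CS_disj by blast
  have "(\<Sum>b\<le>n. length (cseq M x b)) = (\<Sum>b\<le>n. card (CS M x b))" by simp
  also have "\<dots> = card (\<Union>b\<le>n. CS M x b)"
    using card_UN_disjoint[OF _ fin dis] by simp
  also have "\<dots> \<le> card {..<t0}"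
    by (rule card_mono) (use CS_halt[OF halt] in auto)
  finally show ?thesis by simp
qed

lemma cseq_states:
  assumes wf: "wf_tm M"
  shows "set (cseq M x b) \<subseteq> tm_states M"
  using inv_all[OF wf] by (auto simp: cseq_def inv_at_def)

lemma asym:
  fixes B n :: nat
  assumes B: "2 \<le> B" and n4: "4 \<le> n" and nB: "real B ^ 4 \<le> real n"
  defines "l \<equiv> nat \<lfloor>ln (real n) / (2 * ln (real B))\<rfloor>"
  shows "real n * ln (real n) / (8 * ln (real B)) \<le> real l * (real n + 1 - real B ^ l)"
proof -
  define L where "L = ln (real n) / (2 * ln (real B))"
  have lnB: "0 < ln (real B)" using B by simp
  have npos: "0 < real n" using n4 by simp
  have "ln (real B ^ 4) \<le> ln (real n)" using nB npos B by (subst ln_le_cancel_iff) auto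
  then have lnn: "4 * ln (real B) \<le> ln (real n)" by (simp add: ln_realpow)
  have L2: "2 \<le> L" unfolding L_def using lnB lnn by (simp add: field_simps)
  have lL: "real l \<le> L" "L - 1 \<le> real l" unfolding l_def L_def[symmetric] using L2 by linarith+
  have lL2: "L / 2 \<le> real l" using lL L2 by linarith
  have "real B ^ l = exp (real l * ln (real B))" using B by (simp add: exp_of_nat_mult)
  also have "\<dots> \<le> exp (L * ln (real B))" using lL lnB by (simp add: mult_right_mono)
  also have "L * ln (real B) = ln (real n) / 2" unfolding L_def using lnB by (simp add: field_simps)
  also have "exp (ln (real n) / 2) = sqrt (real n)"
    using npos powr_half_sqrt[of "real n"] by (simp add: powr_def)
  finally have Bl: "real B ^ l \<le> sqrt (real n)" .
  have s2: "2 \<le> sqrt (real n)" using n4 by (simp add: real_le_rsqrt)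
  have "sqrt (real n) * sqrt (real n) = real n" by simp
  moreover have "2 * sqrt (real n) \<le> sqrt (real n) * sqrt (real n)"
    using s2 by (intro mult_right_mono) auto
  ultimately have "2 * sqrt (real n) \<le> real n" by simp
  then have h: "real n / 2 \<le> real n + 1 - real B ^ l" using Bl by linarith
  have "real n * ln (real n) / (8 * ln (real B)) = (L / 2) * (real n / 2)"
    unfolding L_def using lnB by (simp add: field_simps)
  also have "\<dots> \<le> real l * (real n + 1 - real B ^ l)"
    using lL2 h L2 npos by (intro mult_mono) auto
  finally show ?thesis .
qed



lemma halt_of:
  assumes "tm_computes_within M Tn x z"
  shows "\<exists>t0. real t0 \<le> Tn \<and> stt M x t0 \<in> tm_final M \<and>
    (\<exists>y. (y = [] \<or> last y \<noteq> Blank) \<and> tpe M x t0 = tape_of y \<and> z = sigma_part y)"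
proof -
  have "\<exists>t::nat. real t \<le> Tn \<and> (case (tm_step M ^^ t) (init_config M x) of (q, tp, p) \<Rightarrow> q \<in> tm_final M \<and>
          (\<exists>y. (y = [] \<or> last y \<noteq> Blank) \<and> tp = tape_of y \<and> z = sigma_part y))"
    using assms by (simp only: tm_computes_within_def)
  then obtain t where tc: "real t \<le> Tn \<and> (case (tm_step M ^^ t) (init_config M x) of (q, tp, p) \<Rightarrow> q \<in> tm_final M \<and>
          (\<exists>y. (y = [] \<or> last y \<noteq> Blank) \<and> tp = tape_of y \<and> z = sigma_part y))"
    by (rule exE)
  note t = conjunct1[OF tc] and c = conjunct2[OF tc]
  have e: "(tm_step M ^^ t) (init_config M x) = (stt M x t, tpe M x t, hps M x t)"
    using run_eq[of M x t] unfolding run_def .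
  have "stt M x t \<in> tm_final M \<and>
          (\<exists>y. (y = [] \<or> last y \<noteq> Blank) \<and> tpe M x t = tape_of y \<and> z = sigma_part y)"
    using c unfolding e by simp
  then show ?thesis using t by blast
qed

lemma hps_le_halt:
  assumes wf: "wf_tm M" and halt: "stt M x t0 \<in> tm_final M"
  shows "hps M x t \<le> t0"
proof (cases "t \<le> t0")
  case True then show ?thesis using pos_le_time[OF wf, of x t] by simp
next
  case False
  then have "run M x t = run M x t0" using final_stays'[OF halt, of t] by simp
  then have "hps M x t = hps M x t0" by (simp add: hps_def)
  then show ?thesis using pos_le_time[OF wf, of x t0] by simp
qed

lemma reach_bounded:
  assumes wf: "wf_tm M" and comp: "\<forall>x. tm_computes_within M (T (length x)) x (f x)"
    and lim: "(\<lambda>n. T n / (real n * ln (real n))) \<longlonglongrightarrow> 0"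
  shows "\<exists>R\<ge>1. \<forall>x t. hps M x t < length x + R"
proof -
  define Q where "Q = tm_states M"
  have fQ: "finite Q" and sQ: "tm_start M \<in> Q" using wf by (auto simp: wf_tm_def Q_def)
  have cQ: "1 \<le> card Q" using fQ sQ by (metis One_nat_def Suc_leI card_gt_0_iff empty_iff)
  define B where "B = card Q + 1"
  have B2: "2 \<le> B" using cQ by (simp add: B_def)
  define c where "c = 1 / (8 * ln (real B))"
  have lnB: "0 < ln (real B)" using B2 by simp
  have c0: "0 < c" using lnB by (simp add: c_def)
  have "\<forall>\<^sub>F n in sequentially. T n / (real n * ln (real n)) < c"
    using order_tendstoD(2)[OF lim c0] .
  then obtain N1 where N1: "\<And>n. N1 \<le> n \<Longrightarrow> T n / (real n * ln (real n)) < c"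
    by (auto simp: eventually_sequentially)
  define N0 where "N0 = max N1 (max 4 (nat \<lceil>real B ^ 4\<rceil>))"
  have big: "T n < real n * ln (real n) / (8 * ln (real B))" if "N0 \<le> n" for n
  proof -
    have n4: "4 \<le> n" using that by (simp add: N0_def)
    then have p: "0 < real n * ln (real n)" by simp
    have "T n / (real n * ln (real n)) < c" using N1 that by (simp add: N0_def)
    then have "T n < c * (real n * ln (real n))" using p by (simp add: divide_less_eq)
    then show ?thesis by (simp add: c_def)
  qed
  define R where "R = Suc (\<Sum>n<N0. nat \<lceil>T n\<rceil>)"
  have small: "hps M x t < length x + R" if "length x < N0" for x t
  proof -
    obtain t0 where t0: "real t0 \<le> T (length x)" "stt M x t0 \<in> tm_final M"
      using halt_of[OF comp[rule_format, of x]] by blast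
    have "hps M x t \<le> t0" by (rule hps_le_halt[OF wf t0(2)])
    also have "t0 \<le> nat \<lceil>T (length x)\<rceil>" using t0(1) by linarith
    also have "\<dots> \<le> (\<Sum>n<N0. nat \<lceil>T n\<rceil>)"
      using that by (intro member_le_sum) auto
    finally show ?thesis by (simp add: R_def)
  qed
  have "\<forall>x t. hps M x t < length x + R"
  proof (rule ccontr)
    assume "\<not> (\<forall>x t. hps M x t < length x + R)"
    then have "\<exists>k. \<exists>x t. length x = k \<and> length x + R \<le> hps M x t" by (auto simp: not_less)
    then obtain k where k: "\<exists>x t. length x = k \<and> length x + R \<le> hps M x t"
      and kmin: "\<forall>m<k. \<not> (\<exists>x t. length x = m \<and> length x + R \<le> hps M x t)"
      using exists_least_iff[of "\<lambda>k. \<exists>x t. length x = k \<and> length x + R \<le> hps M x t"] by blast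
    obtain x tX where x: "length x = k" "length x + R \<le> hps M x tX" using k by blast
    have kN0: "N0 \<le> k" using small[of x tX] x by linarith
    obtain t0 where t0: "real t0 \<le> T k" "stt M x t0 \<in> tm_final M"
      using halt_of[OF comp[rule_format, of x]] x by blast
    have inj: "inj_on (cseq M x) {..k}"
    proof -
      have ne: "cseq M x b1 \<noteq> cseq M x b2" if "b1 < b2" "b2 \<le> k" for b1 b2
      proof
        assume eq: "cseq M x b1 = cseq M x b2"
        have "\<exists>s. length (take b1 x @ drop b2 x) + R \<le> hps M (take b1 x @ drop b2 x) s"
          by (rule cut[OF wf t0(2) that(1) _ eq x(2)]) (use that x in \<open>auto simp: R_def\<close>)
        moreover have "length (take b1 x @ drop b2 x) < k" using that x by auto
        ultimately show False using kmin by blast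
      qed
      show ?thesis
      proof (rule inj_onI)
        fix b1 b2 assume "b1 \<in> {..k}" "b2 \<in> {..k}" "cseq M x b1 = cseq M x b2"
        then show "b1 = b2" using ne by (metis atMost_iff linorder_neqE_nat)
      qed
    qed
    define A where "A = cseq M x ` {..k}"
    have cA: "card A = Suc k" using card_image[OF inj] by (simp add: A_def)
    have sA: "(\<Sum>xs\<in>A. length xs) = (\<Sum>b\<le>k. length (cseq M x b))"
      unfolding A_def using sum.reindex[OF inj, of length] by simp
    define l where "l = nat \<lfloor>ln (real k) / (2 * ln (real B))\<rfloor>"
    have low: "real l * (real (card A) - real B ^ l) \<le> real (\<Sum>xs\<in>A. length xs)"
      using sum_lengths_lower[OF fQ, of A l] cseq_states[OF wf] unfolding B_def Q_def A_def by auto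
    have tb: "(\<Sum>b\<le>k. length (cseq M x b)) \<le> t0" by (rule time_bound[OF t0(2)])
    have k4: "4 \<le> k" using kN0 by (simp add: N0_def)
    have kB: "real B ^ 4 \<le> real k"
    proof -
      have "real B ^ 4 \<le> real (nat \<lceil>real B ^ 4\<rceil>)" by linarith
      also have "\<dots> \<le> real k" using kN0 by (simp add: N0_def)
      finally show ?thesis .
    qed
    have as: "real k * ln (real k) / (8 * ln (real B)) \<le> real l * (real k + 1 - real B ^ l)"
      using asym[OF B2 k4 kB] unfolding l_def by simp
    have "real l * (real k + 1 - real B ^ l) \<le> real t0"
      using low cA sA tb by (metis add.commute of_nat_Suc of_nat_le_iff order_trans)
    then show False using as t0(1) big[OF kN0] by linarith
  qed
  then show ?thesis by (intro exI[of _ R]) (simp add: R_def)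
qed

lemma length_sigma_part: "length (sigma_part y) \<le> length y"
  by (induction y) (auto simp: sigma_part_def split: tsym.split)

lemma out_len:
  assumes wf: "wf_tm M" and comp: "tm_computes_within M Tn x z"
    and R: "1 \<le> R" and reach: "\<forall>t. hps M x t < length x + R"
  shows "length z < length x + R"
proof -
  obtain t0 y where t0: "stt M x t0 \<in> tm_final M" "y = [] \<or> last y \<noteq> Blank"
    "tpe M x t0 = tape_of y" "z = sigma_part y"
    using halt_of[OF comp] by blast
  have "length y < length x + R"
  proof (rule ccontr)
    assume "\<not> length y < length x + R"
    then have ly: "length x + R \<le> length y" by simp
    then have ne: "y \<noteq> []" using R by (metis le_zero_eq list.size(3) not_one_le_zero add_is_0)
    define k where "k = length y"
    have "tpe M x t0 k = last y" using ne t0(3) by (simp add: tape_of_def k_def last_conv_nth)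
    moreover have "tpe M x t0 k = tpe M x 0 k"
    proof (rule tape_unchanged[OF wf])
      show "\<forall>u\<in>{0..<t0}. hps M x u \<noteq> k" using reach ly by (metis k_def leD order_trans less_imp_le)
    qed simp
    moreover have "tpe M x 0 k = Blank" using ly R ne by (simp add: tpe_def run_0 tape_of_def k_def)
    ultimately show False using t0(2) ne by simp
  qed
  then show ?thesis using length_sigma_part[of y] t0(4) by simp
qed



lemma word_prod_carrier:
  assumes "group G" "set ws \<subseteq> carrier G"
  shows "word_prod G ws \<in> carrier G"
  using assms(2)
proof (induction ws)
  case Nil then show ?case using assms(1) by (simp add: word_prod_def group.is_monoid monoid.one_closed)
next
  case (Cons a ws) then show ?case using assms(1)
    by (simp add: word_prod_def group.is_monoid monoid.m_closed)
qed

lemma word_prod_snoc: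
  assumes "group G" "set ws \<subseteq> carrier G" "s \<in> carrier G"
  shows "word_prod G (ws @ [s]) = word_prod G ws \<otimes>\<^bsub>G\<^esub> s"
  using assms(2)
proof (induction ws)
  case Nil then show ?case using assms(1,3)
    by (simp add: word_prod_def group.is_monoid monoid.r_one monoid.l_one)
next
  case (Cons a ws)
  have "word_prod G ((a # ws) @ [s]) = a \<otimes>\<^bsub>G\<^esub> word_prod G (ws @ [s])" by (simp add: word_prod_def)
  also have "\<dots> = a \<otimes>\<^bsub>G\<^esub> (word_prod G ws \<otimes>\<^bsub>G\<^esub> s)" using Cons by simp
  also have "\<dots> = (a \<otimes>\<^bsub>G\<^esub> word_prod G ws) \<otimes>\<^bsub>G\<^esub> s"
    using Cons.prems assms word_prod_carrier[OF assms(1), of ws]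
    by (simp add: group.is_monoid monoid.m_assoc)
  also have "\<dots> = word_prod G (a # ws) \<otimes>\<^bsub>G\<^esub> s" by (simp add: word_prod_def)
  finally show ?case .
qed

theorem theorem1p4:
  fixes G :: "('g, 'b) monoid_scheme"
    and S :: "'g set"
    and L :: "('a::finite) list set"
    and \<psi> :: "'a list \<Rightarrow> 'g"
  assumes "group G"
    and "finite S"
    and "semigroup_generates G S"
    and "bij_betw \<psi> L (carrier G)"
    and "\<forall>s \<in> S. \<exists>(f :: 'a list \<Rightarrow> 'a list) (M :: 'a tm) (T :: nat \<Rightarrow> real).
           (\<forall>w \<in> L. f w \<in> L \<and> \<psi> (f w) = \<psi> w \<otimes>\<^bsub>G\<^esub> s) \<and>
           tm_computes_in_time M T f \<and>
           ((\<lambda>n. T n / (real n * ln (real n))) \<longlonglongrightarrow> 0)"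
  shows "\<exists>C::real. C > 0 \<and>
           (\<forall>g \<in> carrier G. \<forall>w \<in> L. \<psi> w = g \<longrightarrow>
              real (length w) \<le> C * (real (word_length G S g) + 1))"
proof -
  note grp = assms(1) and bij = assms(4)
  have SG: "S \<subseteq> carrier G" and gen: "carrier G = {word_prod G ws | ws. ws \<noteq> [] \<and> set ws \<subseteq> S}"
    using assms(3) by (auto simp: semigroup_generates_def)
  have step: "\<exists>K. \<forall>w\<in>L. \<exists>w'\<in>L. \<psi> w' = \<psi> w \<otimes>\<^bsub>G\<^esub> s \<and> length w' \<le> length w + K" if s: "s \<in> S" for s
  proof -
    obtain f :: "'a list \<Rightarrow> 'a list" and M :: "'a tm" and T :: "nat \<Rightarrow> real" where
      f: "\<forall>w \<in> L. f w \<in> L \<and> \<psi> (f w) = \<psi> w \<otimes>\<^bsub>G\<^esub> s" and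
      c: "tm_computes_in_time M T f" and lim: "(\<lambda>n. T n / (real n * ln (real n))) \<longlonglongrightarrow> 0"
      using assms(5) s by blast
    have wf: "wf_tm M" and comp: "\<forall>x. tm_computes_within M (T (length x)) x (f x)"
      using c by (auto simp: tm_computes_in_time_def)
    obtain R where R: "1 \<le> R" "\<forall>x t. hps M x t < length x + R"
      using reach_bounded[OF wf comp lim] by blast
    have "length (f w) \<le> length w + R" for w
      using out_len[OF wf comp[rule_format, of w] R(1)] R(2) by fastforce
    then show ?thesis using f by blast
  qed
  then obtain Kf where Kf: "\<forall>s\<in>S. \<forall>w\<in>L. \<exists>w'\<in>L. \<psi> w' = \<psi> w \<otimes>\<^bsub>G\<^esub> s \<and> length w' \<le> length w + Kf s"
    by metis
  define K where "K = (\<Sum>s\<in>S. Kf s)"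
  have KS: "Kf s \<le> K" if "s \<in> S" for s
    unfolding K_def using assms(2) that by (intro member_le_sum) auto
  have one: "\<one>\<^bsub>G\<^esub> \<in> carrier G" using grp by (simp add: group.is_monoid monoid.one_closed)
  obtain we where we: "we \<in> L" "\<psi> we = \<one>\<^bsub>G\<^esub>"
    using bij one unfolding bij_betw_def by (metis imageE)
  have claim: "set ws \<subseteq> S \<Longrightarrow> \<exists>w\<in>L. \<psi> w = word_prod G ws \<and> length w \<le> length we + K * length ws" for ws
  proof (induction ws rule: rev_induct)
    case Nil then show ?case using we by (auto simp: word_prod_def)
  next
    case (snoc s ws)
    then obtain w where w: "w \<in> L" "\<psi> w = word_prod G ws" "length w \<le> length we + K * length ws" by auto
    have sS: "s \<in> S" using snoc.prems by simp
    obtain w' where w': "w' \<in> L" "\<psi> w' = \<psi> w \<otimes>\<^bsub>G\<^esub> s" "length w' \<le> length w + Kf s"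
      using Kf sS w(1) by blast
    have "set ws \<subseteq> carrier G" "s \<in> carrier G" using snoc.prems SG by auto
    then have "\<psi> w' = word_prod G (ws @ [s])"
      using w'(2) w(2) word_prod_snoc[OF grp, of ws s] by simp
    moreover have "length w' \<le> length we + K * length (ws @ [s])"
      using w'(3) w(3) KS[OF sS] by simp
    ultimately show ?case using w'(1) by blast
  qed
  have "real (length w) \<le> real (length we + K + 1) * (real (word_length G S g) + 1)"
    if g: "g \<in> carrier G" and w: "w \<in> L" "\<psi> w = g" for g w
  proof -
    have ex: "\<exists>n ws. set ws \<subseteq> S \<and> length ws = n \<and> word_prod G ws = g"
      using g gen by auto
    define d where "d = word_length G S g"
    have "\<exists>ws. set ws \<subseteq> S \<and> length ws = d \<and> word_prod G ws = g"
      unfolding d_def word_length_def using ex by (rule LeastI_ex[where P = "\<lambda>n. \<exists>ws. set ws \<subseteq> S \<and> length ws = n \<and> word_prod G ws = g"])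
    then obtain ws where ws: "set ws \<subseteq> S" "length ws = d" "word_prod G ws = g" by blast
    obtain w' where w': "w' \<in> L" "\<psi> w' = g" "length w' \<le> length we + K * d"
      using claim[OF ws(1)] ws by auto
    have "w' = w" using bij w w' unfolding bij_betw_def inj_on_def by metis
    then have "length w \<le> length we + K * d" using w' by simp
    also have "\<dots> \<le> (length we + K + 1) * (d + 1)" by (simp add: algebra_simps)
    finally have "length w \<le> (length we + K + 1) * (d + 1)" .
    then have "real (length w) \<le> real ((length we + K + 1) * (d + 1))" by (simp only: of_nat_le_iff)
    then show ?thesis unfolding d_def by (simp only: of_nat_mult of_nat_add of_nat_1)
  qed
  then show ?thesis by (intro exI[of _ "real (length we + K + 1)"]) auto
qed

end
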